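(* Let $(\mathbb S,+,\cdot)$ be an S-Field. Then $(\mathbb S_0,+,\cdot)$ (operations restricted to $\mathbb S_0$) forms a Field with Unity $1$, where $e=1$ is the Unity of $(\mathbb S,+,\cdot)$.
   Context: An S-Structure is a triple $(\mathbb S,+,\cdot)$ where $\mathbb S$ is a set and $+,\cdot$ are binary operations on $\mathbb S$ such that: $(\mathbb S,+)$ is a commutative group with identity $0$ (the inverse of $s$ is written $-s$, and $s-t:=s+(-t)$); $\mathbb S$ is closed under $\cdot$; and there exists $s\in\mathbb S$ with $0\cdot s\neq 0$ or $s\cdot 0\neq 0$. Multiplication binds tighter than addition. The structures considered come with a distinguished element of $\mathbb S$ denoted $1$. It is Commutative if $s\cdot t=t\cdot s$ for all $s,t$. For a Commutative S-Structure and $\alpha\in\mathbb S$, put $\mathbb S_\alpha=\{s\in\mathbb S:0\cdot s=s\cdot 0=\alpha\}$ and $\Lambda=\{\alpha\in\mathbb S:\mathbb S_\alpha\neq\emptyset\}$. Wheel Distributive: $s\cdot(t+r)+(s\cdot 0)=(s\cdot t)+(s\cdot r)$ for all $s,t,r\in\mathbb S$. S-Associative: for all $m,n\in\mathbb S_0$ and $s\in\mathbb S$, $m\cdot(n\cdot s)=(m\cdot n)\cdot s-([(m-1)\cdot(n-1)]\cdot(0\cdot s))$. Base: if $\mathbb S_0\neq\emptyset$ and $\alpha\in\Lambda$, $q\in\mathbb S_\alpha$ is a Base for $\mathbb S_\alpha$ if $q+\beta\in\mathbb S_\alpha$ for all $\beta\in\mathbb S_0$ and every $s\in\mathbb S_\alpha$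 equals $q+\beta$ for some $\beta\in\mathbb S_0$. Coordinated: $\mathbb S_0\neq\emptyset$ and every $\mathbb S_\alpha$ with $\alpha\in\Lambda$ has a Base. Standard Bases: a Coordinated Commutative S-Structure has Standard Bases if there is a specified element $q_0(1)\in\mathbb S_1$ which is a Base for $\mathbb S_1$, and for every $\alpha\in\Lambda$ the element $q_0(\alpha):=\alpha\cdot(q_0(1)+1)-1$ lies in $\mathbb S_\alpha$ and is a Base for $\mathbb S_\alpha$. An Essential S-Structure is an S-Structure that is Commutative, Wheel Distributive, S-Associative, has Standard Bases (in particular is Coordinated), satisfies $0,1\in\mathbb S_0$, and satisfies $\mathbb S_0=\{1\cdot x:x\in\mathbb S_0\}$. A Unity is an element $e\in\Lambda$ with $e\cdot s=s\cdot e=s$ for all $s\in\mathbb S$. Scalar Inverses: the structure has a Unity $e$ and for every $x\in\mathbb S_0$ with $x\neq 0$ there is $x^{-1}\in\mathbb S_0$ with $x\cdot x^{-1}=x^{-1}\cdot x=e$. An S-Ring is an Essential S-Structure with a Unity; an S-Field is an S-Ring with Scalar Inverses. *)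

theory Defs
  imports "HOL-Algebra.Ring"
begin

text \<open>An S-Structure is modelled on a whole HOL type 'a (the set S is UNIV),
with addition pl, negation neg, zero z, multiplication mul and the
distinguished element u.\<close>

definition S_structure ::
  "('a \<Rightarrow> 'a \<Rightarrow> 'a) \<Rightarrow> ('a \<Rightarrow> 'a) \<Rightarrow> 'a \<Rightarrow> ('a \<Rightarrow> 'a \<Rightarrow> 'a) \<Rightarrow> bool" where
  "S_structure pl neg z mul \<longleftrightarrow>
     (\<forall>a b c. pl (pl a b) c = pl a (pl b c)) \<and>
     (\<forall>a b. pl a b = pl b a) \<and>
     (\<forall>a. pl z a = a) \<and>
     (\<forall>a. pl a (neg a) = z) \<and>
     (\<exists>s. mul z s \<noteq> z \<or> mul s z \<noteq> z)"

definition S_commutative :: "('a \<Rightarrow> 'a \<Rightarrow> 'a) \<Rightarrow> bool" where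
  "S_commutative mul \<longleftrightarrow> (\<forall>s t. mul s t = mul t s)"

definition S_sub :: "('a \<Rightarrow> 'a \<Rightarrow> 'a) \<Rightarrow> ('a \<Rightarrow> 'a) \<Rightarrow> 'a \<Rightarrow> 'a \<Rightarrow> 'a" where
  "S_sub pl neg s t = pl s (neg t)"

definition S_alpha :: "'a \<Rightarrow> ('a \<Rightarrow> 'a \<Rightarrow> 'a) \<Rightarrow> 'a \<Rightarrow> 'a set" where
  "S_alpha z mul \<alpha> = {s. mul z s = \<alpha> \<and> mul s z = \<alpha>}"

definition S_Lambda :: "'a \<Rightarrow> ('a \<Rightarrow> 'a \<Rightarrow> 'a) \<Rightarrow> 'a set" where
  "S_Lambda z mul = {\<alpha>. S_alpha z mul \<alpha> \<noteq> {}}"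

definition wheel_distributive :: "('a \<Rightarrow> 'a \<Rightarrow> 'a) \<Rightarrow> 'a \<Rightarrow> ('a \<Rightarrow> 'a \<Rightarrow> 'a) \<Rightarrow> bool" where
  "wheel_distributive pl z mul \<longleftrightarrow>
     (\<forall>s t r. pl (mul s (pl t r)) (mul s z) = pl (mul s t) (mul s r))"

definition S_associative ::
  "('a \<Rightarrow> 'a \<Rightarrow> 'a) \<Rightarrow> ('a \<Rightarrow> 'a) \<Rightarrow> 'a \<Rightarrow> ('a \<Rightarrow> 'a \<Rightarrow> 'a) \<Rightarrow> 'a \<Rightarrow> bool" where
  "S_associative pl neg z mul u \<longleftrightarrow>
     (\<forall>m\<in>S_alpha z mul z. \<forall>n\<in>S_alpha z mul z. \<forall>s.
        mul m (mul n s) =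
        S_sub pl neg (mul (mul m n) s)
          (mul (mul (S_sub pl neg m u) (S_sub pl neg n u)) (mul z s)))"

definition is_base :: "('a \<Rightarrow> 'a \<Rightarrow> 'a) \<Rightarrow> 'a \<Rightarrow> ('a \<Rightarrow> 'a \<Rightarrow> 'a) \<Rightarrow> 'a \<Rightarrow> 'a \<Rightarrow> bool" where
  "is_base pl z mul \<alpha> q \<longleftrightarrow>
     S_alpha z mul z \<noteq> {} \<and> \<alpha> \<in> S_Lambda z mul \<and>
     q \<in> S_alpha z mul \<alpha> \<and>
     (\<forall>\<beta>\<in>S_alpha z mul z. pl q \<beta> \<in> S_alpha z mul \<alpha>) \<and>
     (\<forall>s\<in>S_alpha z mul \<alpha>. \<exists>\<beta>\<in>S_alpha z mul z. s = pl q \<beta>)"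

definition coordinated :: "('a \<Rightarrow> 'a \<Rightarrow> 'a) \<Rightarrow> 'a \<Rightarrow> ('a \<Rightarrow> 'a \<Rightarrow> 'a) \<Rightarrow> bool" where
  "coordinated pl z mul \<longleftrightarrow>
     S_alpha z mul z \<noteq> {} \<and> (\<forall>\<alpha>\<in>S_Lambda z mul. \<exists>q. is_base pl z mul \<alpha> q)"

text \<open>Standard Bases: the specified element q0(1) is existentially quantified.\<close>
definition standard_bases ::
  "('a \<Rightarrow> 'a \<Rightarrow> 'a) \<Rightarrow> ('a \<Rightarrow> 'a) \<Rightarrow> 'a \<Rightarrow> ('a \<Rightarrow> 'a \<Rightarrow> 'a) \<Rightarrow> 'a \<Rightarrow> bool" where
  "standard_bases pl neg z mul u \<longleftrightarrow>
     coordinated pl z mul \<and> S_commutative mul \<and>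
     (\<exists>q1. q1 \<in> S_alpha z mul u \<and> is_base pl z mul u q1 \<and>
        (\<forall>\<alpha>\<in>S_Lambda z mul.
           S_sub pl neg (mul \<alpha> (pl q1 u)) u \<in> S_alpha z mul \<alpha> \<and>
           is_base pl z mul \<alpha> (S_sub pl neg (mul \<alpha> (pl q1 u)) u)))"

definition essential_S_structure ::
  "('a \<Rightarrow> 'a \<Rightarrow> 'a) \<Rightarrow> ('a \<Rightarrow> 'a) \<Rightarrow> 'a \<Rightarrow> ('a \<Rightarrow> 'a \<Rightarrow> 'a) \<Rightarrow> 'a \<Rightarrow> bool" where
  "essential_S_structure pl neg z mul u \<longleftrightarrow>
     S_structure pl neg z mul \<and>
     S_commutative mul \<and>
     wheel_distributive pl z mul \<and>
     S_associative pl neg z mul u \<and>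
     standard_bases pl neg z mul u \<and>
     z \<in> S_alpha z mul z \<and> u \<in> S_alpha z mul z \<and>
     S_alpha z mul z = {mul u x | x. x \<in> S_alpha z mul z}"

definition is_unity :: "'a \<Rightarrow> ('a \<Rightarrow> 'a \<Rightarrow> 'a) \<Rightarrow> 'a \<Rightarrow> bool" where
  "is_unity z mul e \<longleftrightarrow> e \<in> S_Lambda z mul \<and> (\<forall>s. mul e s = s \<and> mul s e = s)"

definition S_ring ::
  "('a \<Rightarrow> 'a \<Rightarrow> 'a) \<Rightarrow> ('a \<Rightarrow> 'a) \<Rightarrow> 'a \<Rightarrow> ('a \<Rightarrow> 'a \<Rightarrow> 'a) \<Rightarrow> 'a \<Rightarrow> bool" where
  "S_ring pl neg z mul u \<longleftrightarrow>
     essential_S_structure pl neg z mul u \<and> (\<exists>e. is_unity z mul e)"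

definition S_field ::
  "('a \<Rightarrow> 'a \<Rightarrow> 'a) \<Rightarrow> ('a \<Rightarrow> 'a) \<Rightarrow> 'a \<Rightarrow> ('a \<Rightarrow> 'a \<Rightarrow> 'a) \<Rightarrow> 'a \<Rightarrow> bool" where
  "S_field pl neg z mul u \<longleftrightarrow>
     S_ring pl neg z mul u \<and>
     (\<exists>e. is_unity z mul e \<and>
        (\<forall>x\<in>S_alpha z mul z. x \<noteq> z \<longrightarrow>
           (\<exists>y\<in>S_alpha z mul z. mul x y = e \<and> mul y x = e)))"

definition S0_structure ::
  "('a \<Rightarrow> 'a \<Rightarrow> 'a) \<Rightarrow> 'a \<Rightarrow> ('a \<Rightarrow> 'a \<Rightarrow> 'a) \<Rightarrow> 'a \<Rightarrow> 'a ring" where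
  "S0_structure pl z mul u =
     \<lparr>carrier = S_alpha z mul z, monoid.mult = mul, one = u,
      ring.zero = z, add = pl\<rparr>"

end

theory Submission
  imports Defs
begin

theorem theorem3p3p1:
  fixes pl :: "'a \<Rightarrow> 'a \<Rightarrow> 'a" and neg :: "'a \<Rightarrow> 'a" and z :: 'a
    and mul :: "'a \<Rightarrow> 'a \<Rightarrow> 'a" and u :: 'a
  assumes "S_field pl neg z mul u"
  shows "field (S0_structure pl z mul u) \<and> is_unity z mul u"
proof -
  define S0 where "S0 = S_alpha z mul z"
  have SS: "S_structure pl neg z mul" and C: "S_commutative mul"
    and WD: "wheel_distributive pl z mul" and SA: "S_associative pl neg z mul u"
    and SB: "standard_bases pl neg z mul u" and z0: "z \<in> S0" and u0: "u \<in> S0"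
    using assms unfolding S_field_def S_ring_def essential_S_structure_def S0_def by auto
  obtain e where eu: "is_unity z mul e" and inv: "\<forall>x\<in>S0. x \<noteq> z \<longrightarrow> (\<exists>y\<in>S0. mul x y = e \<and> mul y x = e)"
    using assms unfolding S_field_def S0_def by auto
  have pa: "\<And>a b c. pl (pl a b) c = pl a (pl b c)" and pc: "\<And>a b. pl a b = pl b a"
    and pz: "\<And>a. pl z a = a" and pn: "\<And>a. pl a (neg a) = z"
    using SS unfolding S_structure_def by auto
  have mc: "\<And>s t. mul s t = mul t s" using C unfolding S_commutative_def by auto
  have pz2: "\<And>a. pl a z = a" using pz pc by metis
  have canc: "\<And>a b c. pl a b = pl a c \<Longrightarrow> b = c"
  proof -
    fix a b c assume "pl a b = pl a c"
    then have "pl (neg a) (pl a b) = pl (neg a) (pl a c)" by simp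
    then show "b = c" using pa pc pn pz by metis
  qed
  have negz: "neg z = z" using pn pz by metis
  have wd: "\<And>s t r. pl (mul s (pl t r)) (mul s z) = pl (mul s t) (mul s r)"
    using WD unfolding wheel_distributive_def by auto
  have sa: "\<And>m n s. m \<in> S0 \<Longrightarrow> n \<in> S0 \<Longrightarrow> mul m (mul n s) =
        pl (mul (mul m n) s) (neg (mul (mul (pl m (neg u)) (pl n (neg u))) (mul z s)))"
    using SA unfolding S_associative_def S_sub_def S0_def by auto
  have S0I: "\<And>x. mul z x = z \<Longrightarrow> x \<in> S0" unfolding S0_def S_alpha_def using mc by auto
  have S0D: "\<And>x. x \<in> S0 \<Longrightarrow> mul z x = z \<and> mul x z = z" unfolding S0_def S_alpha_def by auto
  have eunit: "\<And>s. mul e s = s \<and> mul s e = s" using eu unfolding is_unity_def by auto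
  have e0: "e \<in> S0" using S0I eunit mc by metis
  obtain q1 where q1: "q1 \<in> S_alpha z mul u" and q1b: "\<forall>\<alpha>\<in>S_Lambda z mul.
           S_sub pl neg (mul \<alpha> (pl q1 u)) u \<in> S_alpha z mul \<alpha>"
    using SB unfolding standard_bases_def by auto
  have eL: "e \<in> S_Lambda z mul" using eu unfolding is_unity_def by auto
  have "S_sub pl neg (mul e (pl q1 u)) u = q1"
    unfolding S_sub_def using eunit pa pn pz2 by metis
  then have "q1 \<in> S_alpha z mul e" using q1b eL by metis
  then have ue: "u = e" using q1 unfolding S_alpha_def by auto
  have addc: "\<And>a b. a \<in> S0 \<Longrightarrow> b \<in> S0 \<Longrightarrow> pl a b \<in> S0"
  proof -
    fix a b assume "a \<in> S0" "b \<in> S0"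
    then have "pl (mul z (pl a b)) (mul z z) = pl z z" using wd S0D by metis
    then show "pl a b \<in> S0" using S0I S0D z0 pz2 by metis
  qed
  have negc: "\<And>a. a \<in> S0 \<Longrightarrow> neg a \<in> S0"
  proof -
    fix a assume a: "a \<in> S0"
    have "pl (mul z (pl a (neg a))) (mul z z) = pl (mul z a) (mul z (neg a))" using wd by metis
    then have "pl z z = pl z (mul z (neg a))" using a S0D z0 pn by metis
    then show "neg a \<in> S0" using S0I canc by metis
  qed
  have prod0: "\<And>a b. a \<in> S0 \<Longrightarrow> b \<in> S0 \<Longrightarrow> mul (mul a b) z = z"
  proof -
    fix a b assume a: "a \<in> S0" and b: "b \<in> S0"
    have a1: "pl a u \<in> S0" and b1: "pl b u \<in> S0" using a b u0 addc by auto
    have "mul (pl a u) (mul (pl b u) e) =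
        pl (mul (mul (pl a u) (pl b u)) e) (neg (mul (mul (pl (pl a u) (neg u)) (pl (pl b u) (neg u))) (mul z e)))"
      using sa a1 b1 by blast
    moreover have "pl (pl a u) (neg u) = a" "pl (pl b u) (neg u) = b" using pa pn pz2 by metis+
    moreover have "mul z e = z" using S0D e0 by auto
    ultimately have "mul (pl a u) (pl b u) = pl (mul (pl a u) (pl b u)) (neg (mul (mul a b) z))"
      using eunit by metis
    then have "pl (mul (pl a u) (pl b u)) z = pl (mul (pl a u) (pl b u)) (neg (mul (mul a b) z))"
      using pz2 by metis
    then have "z = neg (mul (mul a b) z)" using canc by metis
    then show "mul (mul a b) z = z" using pn pz2 by metis
  qed
  have mulc: "\<And>a b. a \<in> S0 \<Longrightarrow> b \<in> S0 \<Longrightarrow> mul a b \<in> S0"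
    using prod0 S0I mc by metis
  have massoc: "\<And>a b c. a \<in> S0 \<Longrightarrow> b \<in> S0 \<Longrightarrow> c \<in> S0 \<Longrightarrow> mul (mul a b) c = mul a (mul b c)"
  proof -
    fix a b c assume a: "a \<in> S0" and b: "b \<in> S0" and c: "c \<in> S0"
    have "mul a (mul b c) = pl (mul (mul a b) c) (neg (mul (mul (pl a (neg u)) (pl b (neg u))) (mul z c)))"
      using sa a b by blast
    moreover have "mul z c = z" using S0D c by auto
    moreover have "mul (mul (pl a (neg u)) (pl b (neg u))) z = z"
      using prod0 addc negc a b u0 by metis
    ultimately show "mul (mul a b) c = mul a (mul b c)" using negz pz2 by metis
  qed
  have distr: "\<And>a b c. a \<in> S0 \<Longrightarrow> b \<in> S0 \<Longrightarrow> c \<in> S0 \<Longrightarrow> mul (pl a b) c = pl (mul a c) (mul b c)"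
  proof -
    fix a b c assume c: "c \<in> S0"
    have "pl (mul c (pl a b)) (mul c z) = pl (mul c a) (mul c b)" using wd by metis
    then show "mul (pl a b) c = pl (mul a c) (mul b c)" using S0D c pz2 mc by metis
  qed
  have uz: "u \<noteq> z"
  proof
    assume "u = z"
    then have ez: "e = z" using ue by simp
    have "\<And>s. s = z"
    proof -
      fix s
      have "mul z (mul z s) = pl (mul (mul z z) s) (neg (mul (mul (pl z (neg u)) (pl z (neg u))) (mul z s)))"
        using sa z0 by blast
      then have "s = pl s (neg (mul z s))" using ez eunit \<open>u = z\<close> negz pz by metis
      then show "s = z" using ez eunit pn by metis
    qed
    then show False using SS unfolding S_structure_def by metis
  qed
  let ?R = "S0_structure pl z mul u"
  have cr: "cring ?R"
  proof (rule cringI)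
    show "abelian_group ?R"
    proof (rule abelian_groupI, simp_all add: S0_structure_def S0_def[symmetric])
      show "\<And>x y. x \<in> S0 \<Longrightarrow> y \<in> S0 \<Longrightarrow> pl x y \<in> S0" using addc by auto
      show "z \<in> S0" by (rule z0)
      show "\<And>x y w. pl (pl x y) w = pl x (pl y w)" by (rule pa)
      show "\<And>x y. pl x y = pl y x" by (rule pc)
      show "\<And>x. pl z x = x" by (rule pz)
      show "\<And>x. x \<in> S0 \<Longrightarrow> \<exists>y\<in>S0. pl y x = z" using negc pn pc by metis
    qed
    show "comm_monoid ?R"
    proof (rule comm_monoidI, simp_all add: S0_structure_def S0_def[symmetric])
      show "\<And>x y. x \<in> S0 \<Longrightarrow> y \<in> S0 \<Longrightarrow> mul x y \<in> S0" using mulc by auto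
      show "u \<in> S0" by (rule u0)
      show "\<And>x y w. x \<in> S0 \<Longrightarrow> y \<in> S0 \<Longrightarrow> w \<in> S0 \<Longrightarrow> mul (mul x y) w = mul x (mul y w)" by (rule massoc)
      show "\<And>x. mul u x = x" using ue eunit by simp
      show "\<And>x y. mul x y = mul y x" by (rule mc)
    qed
    show "\<And>x y za. x \<in> carrier ?R \<Longrightarrow> y \<in> carrier ?R \<Longrightarrow> za \<in> carrier ?R \<Longrightarrow>
      (x \<oplus>\<^bsub>?R\<^esub> y) \<otimes>\<^bsub>?R\<^esub> za = x \<otimes>\<^bsub>?R\<^esub> za \<oplus>\<^bsub>?R\<^esub> y \<otimes>\<^bsub>?R\<^esub> za"
      by (auto simp: S0_structure_def S0_def[symmetric] distr)
  qed
  have "field ?R"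
  proof (rule cring.cring_fieldI2[OF cr])
    show "\<zero>\<^bsub>?R\<^esub> \<noteq> \<one>\<^bsub>?R\<^esub>" using uz by (simp add: S0_structure_def)
    show "\<And>a. a \<in> carrier ?R \<Longrightarrow> a \<noteq> \<zero>\<^bsub>?R\<^esub> \<Longrightarrow> \<exists>b\<in>carrier ?R. a \<otimes>\<^bsub>?R\<^esub> b = \<one>\<^bsub>?R\<^esub>"
      using inv ue by (auto simp: S0_structure_def S0_def[symmetric])
  qed
  moreover have "is_unity z mul u" using eu ue by simp
  ultimately show ?thesis by simp
qed

end
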